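(* Fix $k$. For $j\ge1$ let $$\Delta_j(m)=(-1)^j\big[2^j\psi^{(j-1)}(2m+1)-\psi^{(j-1)}(m+1+k)-\psi^{(j-1)}(m+1-k)\big],$$ and define $x_0(m)=1$, $x_1(m)=0$, and $x_j(m)=\sum_{l=0}^{j-2}\binom{j-1}{l}\Delta_{j-l}(m)x_l(m)$ for $j\ge2$. Then for every $j\in\mathbb{N}$, $$\frac{d\Delta_j}{dm}=-\Delta_{j+1}\qquad\text{and}\qquad\frac{dx_j}{dm}=-x_{j+1}+j\,\Delta_2\,x_{j-1}.$$
   Context: $\psi^{(n)}(z)=\frac{d^{n+1}}{dz^{n+1}}\log\Gamma(z)$ is the polygamma function. The identities are for values of $m$ where none of $2m+1$, $m+1+k$, $m+1-k$ is a non-positive integer. *)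

theory Defs
  imports "HOL-Analysis.Analysis"
begin

definition Delta :: "complex \<Rightarrow> nat \<Rightarrow> complex \<Rightarrow> complex" where
  "Delta k j m = (-1) ^ j * (2 ^ j * Polygamma (j - 1) (2 * m + 1)
       - Polygamma (j - 1) (m + 1 + k) - Polygamma (j - 1) (m + 1 - k))"

fun xs :: "complex \<Rightarrow> nat \<Rightarrow> complex \<Rightarrow> complex" where
  "xs k 0 m = 1"
| "xs k (Suc 0) m = 0"
| "xs k (Suc (Suc n)) m =
     (\<Sum>l\<le>n. of_nat (Suc n choose l) * Delta k (Suc (Suc n) - l) m * xs k l m)"

end

theory Submission
  imports Defs
begin

lemma Delta_deriv:
  fixes k m :: complex
  assumes a1: "2 * m + 1 \<notin> \<int>\<^sub>\<le>\<^sub>0"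
      and a2: "m + 1 + k \<notin> \<int>\<^sub>\<le>\<^sub>0"
      and a3: "m + 1 - k \<notin> \<int>\<^sub>\<le>\<^sub>0"
      and j: "j \<ge> 1"
  shows "((\<lambda>t. Delta k j t) has_field_derivative (- Delta k (j + 1) m)) (at m)"
proof -
  obtain i where i: "j = Suc i" using j by (cases j) auto
  have P1: "((\<lambda>t. Polygamma i (2 * t + 1)) has_field_derivative Polygamma (Suc i) (2 * m + 1) * 2) (at m)"
    by (rule DERIV_chain2[where g="\<lambda>t. 2 * t + 1" and x=m, OF has_field_derivative_Polygamma[OF a1, of i UNIV, simplified]]) (auto intro!: derivative_eq_intros)
  have P2: "((\<lambda>t. Polygamma i (t + 1 + k)) has_field_derivative Polygamma (Suc i) (m + 1 + k) * 1) (at m)"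
    by (rule DERIV_chain2[where g="\<lambda>t. t + 1 + k" and x=m, OF has_field_derivative_Polygamma[OF a2, of i UNIV, simplified]]) (auto intro!: derivative_eq_intros)
  have P3: "((\<lambda>t. Polygamma i (t + 1 - k)) has_field_derivative Polygamma (Suc i) (m + 1 - k) * 1) (at m)"
    by (rule DERIV_chain2[where g="\<lambda>t. t + 1 - k" and x=m, OF has_field_derivative_Polygamma[OF a3, of i UNIV, simplified]]) (auto intro!: derivative_eq_intros)
  have "((\<lambda>t. (-1) ^ j * (2 ^ j * Polygamma i (2 * t + 1)
       - Polygamma i (t + 1 + k) - Polygamma i (t + 1 - k))) has_field_derivative
       (-1) ^ j * (2 ^ j * (Polygamma (Suc i) (2 * m + 1) * 2)
       - Polygamma (Suc i) (m + 1 + k) * 1 - Polygamma (Suc i) (m + 1 - k) * 1))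
       (at m)"
    by (intro DERIV_cmult DERIV_diff P1 P2 P3)
  then show ?thesis unfolding Delta_def i
    by (simp add: algebra_simps)
qed

lemma sumB:
  fixes D X :: "nat \<Rightarrow> complex"
  assumes X1: "X 1 = 0"
    and Xrec: "\<And>p. X (Suc (Suc p)) = (\<Sum>l\<le>p. of_nat (Suc p choose l) * D (Suc (Suc p) - l) * X l)"
  shows "(\<Sum>l\<le>n. of_nat (Suc n choose l) * of_nat l * D (Suc (Suc n) - l) * X (l - 1))
       = of_nat (Suc n) * X (Suc n)"
proof (cases n)
  case 0
  then show ?thesis using X1 by simp
next
  case (Suc p)
  have "(\<Sum>l\<le>n. of_nat (Suc n choose l) * of_nat l * D (Suc (Suc n) - l) * X (l - 1))
      = (\<Sum>l\<le>p. of_nat (Suc n choose Suc l) * of_nat (Suc l) * D (Suc (Suc n) - Suc l) * X l)"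
    unfolding Suc by (subst sum.atMost_Suc_shift) simp
  also have "\<dots> = (\<Sum>l\<le>p. of_nat (Suc n) * (of_nat (Suc p choose l) * D (Suc (Suc p) - l) * X l))"
  proof (rule sum.cong[OF refl])
    fix l assume "l \<in> {..p}"
    have "(Suc n choose Suc l) * Suc l = Suc n * (n choose l)"
      using Suc_times_binomial_eq[of n l] by simp
    then have "(of_nat (Suc n choose Suc l) * of_nat (Suc l) :: complex) = of_nat (Suc n) * of_nat (n choose l)"
      by (metis of_nat_mult)
    then show "of_nat (Suc n choose Suc l) * of_nat (Suc l) * D (Suc (Suc n) - Suc l) * X l
        = of_nat (Suc n) * (of_nat (Suc p choose l) * D (Suc (Suc p) - l) * X l)"
      unfolding Suc by (simp del: binomial_Suc_Suc of_nat_Suc add: mult.assoc[symmetric])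
  qed
  also have "\<dots> = of_nat (Suc n) * X (Suc n)"
    unfolding Suc by (simp add: Xrec sum_distrib_left)
  finally show ?thesis .
qed

lemma sumC:
  fixes f :: "nat \<Rightarrow> complex"
  shows "(\<Sum>l\<le>Suc n. of_nat (Suc (Suc n) choose l) * f l)
     = (\<Sum>l\<le>n. of_nat (Suc n choose l) * f l) + f (Suc n)
       + (\<Sum>l\<le>n. of_nat (Suc n choose l) * f (Suc l))"
proof -
  have "(\<Sum>l\<le>Suc n. of_nat (Suc (Suc n) choose l) * f l)
     = f 0 + (\<Sum>l\<le>n. of_nat (Suc n choose Suc l) * f (Suc l)) + (\<Sum>l\<le>n. of_nat (Suc n choose l) * f (Suc l))"
    by (subst sum.atMost_Suc_shift) (simp add: sum.distrib algebra_simps)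
  also have "f 0 + (\<Sum>l\<le>n. of_nat (Suc n choose Suc l) * f (Suc l)) = (\<Sum>l\<le>Suc n. of_nat (Suc n choose l) * f l)"
    unfolding sum.atMost_Suc_shift by simp
  also have "\<dots> = (\<Sum>l\<le>n. of_nat (Suc n choose l) * f l) + f (Suc n)"
    by simp
  finally show ?thesis .
qed

lemma alg: "- (a::complex) - b + d * (c * x) = - (a + d * x + b) + (c + 1) * d * x"
  by (simp add: algebra_simps)

theorem lemma1:
  fixes k m :: complex
  assumes "2 * m + 1 \<notin> \<int>\<^sub>\<le>\<^sub>0"
      and "m + 1 + k \<notin> \<int>\<^sub>\<le>\<^sub>0"
      and "m + 1 - k \<notin> \<int>\<^sub>\<le>\<^sub>0"
  shows "(\<forall>j\<ge>1. ((\<lambda>t. Delta k j t) has_field_derivative (- Delta k (j + 1) m)) (at m))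
       \<and> (\<forall>j. ((\<lambda>t. xs k j t) has_field_derivative
               (- xs k (j + 1) m + of_nat j * Delta k 2 m * xs k (j - 1) m)) (at m))"
proof -
  note DD = Delta_deriv[OF assms]
  define D where "D i = Delta k i m" for i
  define X where "X i = xs k i m" for i
  have X1: "X 1 = 0" by (simp add: X_def)
  have Xrec: "\<And>p. X (Suc (Suc p)) = (\<Sum>l\<le>p. of_nat (Suc p choose l) * D (Suc (Suc p) - l) * X l)"
    by (simp add: X_def D_def)
  have main: "((\<lambda>t. xs k j t) has_field_derivative
               (- X (j + 1) + of_nat j * D 2 * X (j - 1))) (at m)" for j
  proof (induction j rule: less_induct)
    case (less j)
    show ?case
    proof (cases j)
      case 0
      then show ?thesis by (simp add: X_def)
    next
      case (Suc j')
      show ?thesis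
      proof (cases j')
        case 0
        then show ?thesis using Suc by (simp add: X_def D_def numeral_2_eq_2)
      next
        case (Suc n)
        have jn: "j = Suc (Suc n)" using Suc \<open>j = Suc j'\<close> by simp
        have IH: "\<And>l. l \<le> n \<Longrightarrow> ((\<lambda>t. xs k l t) has_field_derivative
               (- X (l + 1) + of_nat l * D 2 * X (l - 1))) (at m)"
          using less jn by simp
        have DL: "\<And>l. l \<le> n \<Longrightarrow> ((\<lambda>t. Delta k (Suc (Suc n) - l) t) has_field_derivative
               (- D (Suc (Suc n) - l + 1))) (at m)"
          using DD by (simp add: D_def)
        have "((\<lambda>t. \<Sum>l\<le>n. of_nat (Suc n choose l) * Delta k (Suc (Suc n) - l) t * xs k l t)
            has_field_derivative
            (\<Sum>l\<le>n. of_nat (Suc n choose l) * ((- D (Suc (Suc n) - l + 1)) * X l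
               + D (Suc (Suc n) - l) * (- X (l + 1) + of_nat l * D 2 * X (l - 1))))) (at m)"
          apply (rule DERIV_sum)
          apply (rule DERIV_cong[OF DERIV_mult'[OF DERIV_cmult[OF DL] IH]])
            apply simp
           apply simp
          apply (simp add: X_def D_def algebra_simps)
          done
        moreover have "(\<Sum>l\<le>n. of_nat (Suc n choose l) * ((- D (Suc (Suc n) - l + 1)) * X l
               + D (Suc (Suc n) - l) * (- X (l + 1) + of_nat l * D 2 * X (l - 1))))
           = - X (j + 1) + of_nat j * D 2 * X (j - 1)"
        proof -
          have A: "X (j + 1) = (\<Sum>l\<le>Suc n. of_nat (Suc (Suc n) choose l) * (D (Suc (Suc (Suc n)) - l) * X l))"
            unfolding jn using Xrec[of "Suc n"] by (simp add: mult.assoc)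
          have C: "X (j + 1) = (\<Sum>l\<le>n. of_nat (Suc n choose l) * (D (Suc (Suc (Suc n)) - l) * X l))
              + D 2 * X (Suc n) + (\<Sum>l\<le>n. of_nat (Suc n choose l) * (D (Suc (Suc n) - l) * X (Suc l)))"
            apply (subst A)
            apply (subst sumC)
            apply (simp add: numeral_2_eq_2)
            done
          have B: "(\<Sum>l\<le>n. of_nat (Suc n choose l) * of_nat l * D (Suc (Suc n) - l) * X (l - 1))
              = of_nat (Suc n) * X (Suc n)"
            by (rule sumB[OF X1 Xrec])
          have E: "(\<Sum>l\<le>n. of_nat (Suc n choose l) * ((- D (Suc (Suc n) - l + 1)) * X l
               + D (Suc (Suc n) - l) * (- X (l + 1) + of_nat l * D 2 * X (l - 1))))
            = - (\<Sum>l\<le>n. of_nat (Suc n choose l) * (D (Suc (Suc (Suc n)) - l) * X l))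
              - (\<Sum>l\<le>n. of_nat (Suc n choose l) * (D (Suc (Suc n) - l) * X (Suc l)))
              + D 2 * (\<Sum>l\<le>n. of_nat (Suc n choose l) * of_nat l * D (Suc (Suc n) - l) * X (l - 1))"
            by (simp add: sum.distrib sum_subtractf sum_distrib_left algebra_simps Suc_diff_le
                   flip: sum_negf)
          have jj: "j - 1 = Suc n" "(of_nat j :: complex) = of_nat (Suc n) + 1" using jn by auto
          show ?thesis unfolding E B C jj by (rule alg)
        qed
        ultimately show ?thesis unfolding jn by simp
      qed
    qed
  qed
  show ?thesis
    using DD main by (simp add: X_def D_def)
qed

end
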